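(* Let $\mathbf Y_n=(\mathbf y_1,\dots,\mathbf y_n)=(y_{ij})$ have i.i.d. $N(0,1)$ entries and let $\boldsymbol\Gamma_n=(\gamma_{ij})$ be obtained by applying Gram–Schmidt to its columns ($\mathbf w_1=\mathbf y_1$, $\boldsymbol\gamma_1=\mathbf w_1/\|\mathbf w_1\|$, $\mathbf w_k=\mathbf y_k-\sum_{i<k}\langle\mathbf y_k,\boldsymbol\gamma_i\rangle\boldsymbol\gamma_i$, $\boldsymbol\gamma_k=\mathbf w_k/\|\mathbf w_k\|$). Let $p=p_n$ satisfy $p_n/n\to c$ for some $c\in(0,1]$. Then $$\Big(\sum_{i=1}^p(\sqrt n\gamma_{i1}-y_{i1})^2\Big)^{1/2}\to\sqrt{c/2}\,|N(0,1)|$$ weakly as $n\to\infty$. *)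

theory Defs
  imports "HOL-Probability.Probability"
begin

text \<open>Vectors in R^n are represented as functions nat => real, only indices < n matter
  (indices are 0-based: paper index i corresponds to i-1 here).\<close>

definition vinner :: "nat \<Rightarrow> (nat \<Rightarrow> real) \<Rightarrow> (nat \<Rightarrow> real) \<Rightarrow> real" where
  "vinner n u v = (\<Sum>i<n. u i * v i)"

definition vnorm :: "nat \<Rightarrow> (nat \<Rightarrow> real) \<Rightarrow> real" where
  "vnorm n u = sqrt (vinner n u u)"

fun gs_list :: "nat \<Rightarrow> (nat \<Rightarrow> nat \<Rightarrow> real) \<Rightarrow> nat \<Rightarrow> (nat \<Rightarrow> real) list" where
  "gs_list n Y 0 = []"
| "gs_list n Y (Suc k) =
     (let G = gs_list n Y k;
          yk = (\<lambda>i. Y i k);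
          w = (\<lambda>i. yk i - (\<Sum>g\<leftarrow>G. vinner n yk g * g i))
      in G @ [(\<lambda>i. w i / vnorm n w)])"

text \<open>gs_gamma n Y i k = entry gamma_{ik} of the Gram-Schmidt matrix Gamma_n (0-based).\<close>
definition gs_gamma :: "nat \<Rightarrow> (nat \<Rightarrow> nat \<Rightarrow> real) \<Rightarrow> nat \<Rightarrow> nat \<Rightarrow> real" where
  "gs_gamma n Y i k = (gs_list n Y (Suc k) ! k) i"

end

theory Submission
  imports Defs
begin

theorem (in prob_space) clt_tri:
  fixes X :: "nat \<Rightarrow> nat \<Rightarrow> 'a \<Rightarrow> real"
    and \<mu> :: "real measure"
    and \<sigma> :: real
  assumes X_indep: "\<And>n. indep_vars (\<lambda>i. borel) (X n) {..<n}"
    and \<sigma>_pos: "\<sigma> > 0"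
    and X_distrib: "\<And>n i. i < n \<Longrightarrow> distr M borel (X n i) = \<mu>"
    and \<mu>_real: "real_distribution \<mu>"
    and \<mu>_integrable [simp]: "integrable \<mu> (\<lambda>x. x)"
    and \<mu>_mean_integrable [simp]: "integral\<^sup>L \<mu> (\<lambda>x. x) = 0"
    and \<mu>_square_integrable [simp]: "integrable \<mu> (\<lambda>x. x^2)"
    and \<mu>_variance [simp]: "integral\<^sup>L \<mu> (\<lambda>x. x^2) = \<sigma>\<^sup>2"
  shows "weak_conv_m (\<lambda>n. distr M borel (\<lambda>x. (\<Sum>i<n. X n i x) / sqrt (n * \<sigma>\<^sup>2))) std_normal_distribution"
proof -
  let ?S' = "\<lambda>n x. (\<Sum>i<n. X n i x) / sqrt (real n * \<sigma>\<^sup>2)"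
  define \<phi> where "\<phi> n = char (distr M borel (?S' n))" for n
  define \<psi> where "\<psi> n t = char \<mu> (t / sqrt (\<sigma>\<^sup>2 * real n))" for n :: nat and t

  have X_rv [simp, measurable]: "i < n \<Longrightarrow> random_variable borel (X n i)" for n i
    using X_indep[of n] unfolding indep_vars_def2 by simp
  interpret \<mu>: real_distribution \<mu> by (rule \<mu>_real)

  have main: "\<forall>\<^sub>F n in sequentially.
      cmod (\<phi> n t - (1 + (-(t^2) / 2) / n)^n) \<le>
      t\<^sup>2 / (6 * \<sigma>\<^sup>2) * (LINT x|\<mu>. min (6 * x\<^sup>2) (\<bar>t / sqrt (\<sigma>\<^sup>2 * n)\<bar> * \<bar>x\<bar> ^ 3))" for t
  proof (rule eventually_sequentiallyI)
    fix n :: nat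
    assume "n \<ge> nat (ceiling (t^2 / 4))"
    hence n: "n \<ge> t^2 / 4" by (subst nat_ceiling_le_eq [symmetric])
    let ?t = "t / sqrt (\<sigma>\<^sup>2 * n)"

    define \<psi>' where "\<psi>' n i = char (distr M borel (\<lambda>x. X n i x / sqrt (\<sigma>\<^sup>2 * n)))" for n i
    have *: "\<And>i t. i < n \<Longrightarrow> \<psi>' n i t = \<psi> n t"
      unfolding \<psi>_def \<psi>'_def char_def
      by (subst X_distrib [symmetric]) (auto simp: integral_distr)

    have "\<phi> n t = char (distr M borel (\<lambda>x. \<Sum>i<n. X n i x / sqrt (\<sigma>\<^sup>2 * real n))) t"
      by (auto simp: \<phi>_def sum_divide_distrib ac_simps)
    also have "\<dots> = (\<Prod> i < n. \<psi>' n i t)"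
      unfolding \<psi>'_def
      apply (rule char_distr_sum)
      apply (rule indep_vars_compose2[where X="X n"])
      apply (rule X_indep)
      apply auto
      done
    also have "\<dots> = (\<psi> n t)^n"
      using * by (simp add: prod_constant[symmetric])
    finally have \<phi>_eq: "\<phi> n t =(\<psi> n t)^n" .

    have "norm (\<psi> n t - (1 - ?t^2 * \<sigma>\<^sup>2 / 2)) \<le> ?t\<^sup>2 / 6 * (LINT x|\<mu>. min (6 * x\<^sup>2) (\<bar>?t\<bar> * \<bar>x\<bar> ^ 3))"
      unfolding \<psi>_def by (rule \<mu>.char_approx3, auto)
    also have "?t^2 * \<sigma>\<^sup>2 = t^2 / n"
      using \<sigma>_pos by (simp add: power_divide)
    also have "t^2 / n / 2 = (t^2 / 2) / n"
      by simp
    finally have **: "norm (\<psi> n t - (1 + (-(t^2) / 2) / n)) \<le>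
      ?t\<^sup>2 / 6 * (LINT x|\<mu>. min (6 * x\<^sup>2) (\<bar>?t\<bar> * \<bar>x\<bar> ^ 3))" by simp

    have "norm (\<phi> n t - (complex_of_real (1 + (-(t^2) / 2) / n))^n) \<le>
         n * norm (\<psi> n t - (complex_of_real (1 + (-(t^2) / 2) / n)))"
      using n
      by (auto intro!: norm_power_diff \<mu>.cmod_char_le_1 abs_leI
               simp del: of_real_diff simp: of_real_diff[symmetric] divide_le_eq \<phi>_eq \<psi>_def)
    also have "\<dots> \<le> n * (?t\<^sup>2 / 6 * (LINT x|\<mu>. min (6 * x\<^sup>2) (\<bar>?t\<bar> * \<bar>x\<bar> ^ 3)))"
      by (rule mult_left_mono [OF **], simp)
    also have "\<dots> = (t\<^sup>2 / (6 * \<sigma>\<^sup>2) * (LINT x|\<mu>. min (6 * x\<^sup>2) (\<bar>?t\<bar> * \<bar>x\<bar> ^ 3)))"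
      using \<sigma>_pos by (simp add: field_simps min_absorb2)
    finally show "norm (\<phi> n t - (1 + (-(t^2) / 2) / n)^n) \<le>
        (t\<^sup>2 / (6 * \<sigma>\<^sup>2) * (LINT x|\<mu>. min (6 * x\<^sup>2) (\<bar>?t\<bar> * \<bar>x\<bar> ^ 3)))"
      by simp
  qed

  show ?thesis
  proof (rule levy_continuity)
    fix t
    let ?t = "\<lambda>n. t / sqrt (\<sigma>\<^sup>2 * n)"
    have "\<And>x. (\<lambda>n. min (6 * x\<^sup>2) (\<bar>t\<bar> * \<bar>x\<bar> ^ 3 / \<bar>sqrt (\<sigma>\<^sup>2 * real n)\<bar>)) \<longlonglongrightarrow> 0"
      using \<sigma>_pos
      by (auto simp: real_sqrt_mult min_absorb2
               intro!: tendsto_min[THEN tendsto_eq_rhs] sqrt_at_top[THEN filterlim_compose]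
                       filterlim_tendsto_pos_mult_at_top filterlim_at_top_imp_at_infinity
                       tendsto_divide_0 filterlim_real_sequentially)
    then have "(\<lambda>n. LINT x|\<mu>. min (6 * x\<^sup>2) (\<bar>?t n\<bar> * \<bar>x\<bar> ^ 3)) \<longlonglongrightarrow> (LINT x|\<mu>. 0)"
      by (intro integral_dominated_convergence [where w = "\<lambda>x. 6 * x^2"]) auto
    then have *: "(\<lambda>n. t\<^sup>2 / (6 * \<sigma>\<^sup>2) * (LINT x|\<mu>. min (6 * x\<^sup>2) (\<bar>?t n\<bar> * \<bar>x\<bar> ^ 3))) \<longlonglongrightarrow> 0"
      by (simp only: integral_zero tendsto_mult_right_zero)

    have "(\<lambda>n. complex_of_real ((1 + (-(t^2) / 2) / n)^n)) \<longlonglongrightarrow> complex_of_real (exp (-(t^2) / 2))"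
      by (rule isCont_tendsto_compose [OF _ tendsto_exp_limit_sequentially]) auto
    then have "(\<lambda>n. \<phi> n t) \<longlonglongrightarrow> complex_of_real (exp (-(t^2) / 2))"
      by (rule Lim_transform) (rule Lim_null_comparison [OF main *])
    then show "(\<lambda>n. char (distr M borel (?S' n)) t) \<longlonglongrightarrow> char std_normal_distribution t"
      by (simp add: \<phi>_def char_std_normal_distribution)
  next
    fix n show "real_distribution (distr M borel (?S' n))"
      by (intro real_distribution_distr) auto
  qed (auto intro!: real_dist_normal_dist)
qed

lemma (in prob_space) indep_sets_reindex:
  assumes ind: "indep_sets F I" and injf: "inj_on f J" and sub: "f ` J \<subseteq> I"
  shows "indep_sets (\<lambda>j. F (f j)) J"
proof -
  { fix K A assume K: "K \<subseteq> J" "K \<noteq> {}" "finite K" and A: "A \<in> Pi K (\<lambda>j. F (f j))"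
    define B where "B x = A (the_inv_into K f x)" for x
    have inj: "inj_on f K" using injf K(1) inj_on_subset by blast
    have B: "B \<in> Pi (f`K) F" using A by (auto simp: B_def the_inv_into_f_f[OF inj])
    have fK: "f ` K \<subseteq> I" "f ` K \<noteq> {}" "finite (f ` K)" using K sub by auto
    have "prob (\<Inter>x\<in>f`K. B x) = (\<Prod>x\<in>f`K. prob (B x))"
      using ind fK B unfolding indep_sets_def by blast
    moreover have "(\<Inter>x\<in>f`K. B x) = (\<Inter>k\<in>K. A k)"
      by (simp add: B_def the_inv_into_f_f[OF inj] image_image)
    moreover have "(\<Prod>x\<in>f`K. prob (B x)) = (\<Prod>k\<in>K. prob (A k))"
      by (simp add: prod.reindex[OF inj] B_def the_inv_into_f_f[OF inj])
    ultimately have "prob (\<Inter>k\<in>K. A k) = (\<Prod>k\<in>K. prob (A k))" by simp }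
  moreover have "\<forall>j\<in>J. F (f j) \<subseteq> events" using ind sub unfolding indep_sets_def by auto
  ultimately show ?thesis unfolding indep_sets_def by blast
qed

lemma (in prob_space) indep_vars_reindex:
  assumes "indep_vars M' X I" "inj_on f J" "f ` J \<subseteq> I"
  shows "indep_vars (\<lambda>j. M' (f j)) (\<lambda>j. X (f j)) J"
proof -
  have "indep_sets (\<lambda>i. {X i -` A \<inter> space M |A. A \<in> sets (M' i)}) I"
    "\<forall>i\<in>I. random_variable (M' i) (X i)"
    using assms(1) unfolding indep_vars_def2 by auto
  then show ?thesis unfolding indep_vars_def2
    using indep_sets_reindex[OF _ assms(2,3), of "\<lambda>i. {X i -` A \<inter> space M |A. A \<in> sets (M' i)}"] assms(3)
    by auto
qed

lemma (in prob_space) indep_sum_sq: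
  fixes W :: "nat \<Rightarrow> 'a \<Rightarrow> real"
  assumes ind: "indep_vars (\<lambda>_. borel) W I" and fin: "finite I"
    and sq: "\<And>i. i\<in>I \<Longrightarrow> integrable M (\<lambda>x. (W i x)^2)"
    and mean: "\<And>i. i\<in>I \<Longrightarrow> expectation (W i) = 0"
  shows "integrable M (\<lambda>x. (\<Sum>i\<in>I. W i x)^2)"
    and "expectation (\<lambda>x. (\<Sum>i\<in>I. W i x)^2) = (\<Sum>i\<in>I. expectation (\<lambda>x. (W i x)^2))"
proof -
  have rv[measurable]: "i \<in> I \<Longrightarrow> random_variable borel (W i)" for i
    using ind unfolding indep_vars_def2 by auto
  have int: "i \<in> I \<Longrightarrow> integrable M (W i)" for i
    by (rule square_integrable_imp_integrable[OF rv sq])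
  have pair: "integrable M (\<lambda>x. W i x * W j x) \<and>
      expectation (\<lambda>x. W i x * W j x) = (if i = j then expectation (\<lambda>x. (W i x)^2) else 0)"
    if ij: "i \<in> I" "j \<in> I" for i j
  proof (cases "i = j")
    case True then show ?thesis using sq[OF ij(1)] by (simp add: power2_eq_square)
  next
    case False
    have ind2: "indep_vars (\<lambda>_. borel) W {i, j}" using indep_vars_subset[OF ind] ij by auto
    have p: "(\<lambda>x. \<Prod>k\<in>{i,j}. W k x) = (\<lambda>x. W i x * W j x)" using False by auto
    have "integrable M (\<lambda>x. \<Prod>k\<in>{i,j}. W k x)"
      using ind2 int ij by (intro indep_vars_integrable) auto
    moreover have "expectation (\<lambda>x. \<Prod>k\<in>{i,j}. W k x) = (\<Prod>k\<in>{i,j}. expectation (W k))"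
      using ind2 int ij by (intro indep_vars_lebesgue_integral) auto
    ultimately show ?thesis using False p mean ij by auto
  qed
  have eq: "(\<lambda>x. (\<Sum>i\<in>I. W i x)^2) = (\<lambda>x. \<Sum>i\<in>I. \<Sum>j\<in>I. W i x * W j x)"
    by (simp add: power2_eq_square sum_product)
  show "integrable M (\<lambda>x. (\<Sum>i\<in>I. W i x)^2)"
    unfolding eq proof (intro Bochner_Integration.integrable_sum)
    fix i j assume "i \<in> I" "j \<in> I" then show "integrable M (\<lambda>x. W i x * W j x)" using pair by blast
  qed
  have "expectation (\<lambda>x. \<Sum>i\<in>I. \<Sum>j\<in>I. W i x * W j x) = (\<Sum>i\<in>I. \<Sum>j\<in>I. expectation (\<lambda>x. W i x * W j x))"
    using pair by (subst Bochner_Integration.integral_sum, intro Bochner_Integration.integrable_sum, blast, intro sum.cong refl Bochner_Integration.integral_sum, blast)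
  also have "\<dots> = (\<Sum>i\<in>I. \<Sum>j\<in>I. (if i = j then expectation (\<lambda>x. (W i x)^2) else 0))"
    using pair by (intro sum.cong refl) auto
  also have "\<dots> = (\<Sum>i\<in>I. expectation (\<lambda>x. (W i x)^2))"
    using fin by simp
  finally show "expectation (\<lambda>x. (\<Sum>i\<in>I. W i x)^2) = (\<Sum>i\<in>I. expectation (\<lambda>x. (W i x)^2))"
    unfolding eq .
qed

lemma (in prob_space) indep_sum_cheb:
  fixes W :: "nat \<Rightarrow> 'a \<Rightarrow> real"
  assumes ind: "indep_vars (\<lambda>_. borel) W I" and fin: "finite I"
    and sq: "\<And>i. i\<in>I \<Longrightarrow> integrable M (\<lambda>x. (W i x)^2)"
    and mean: "\<And>i. i\<in>I \<Longrightarrow> expectation (W i) = 0"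
    and t: "t > 0"
  shows "prob {x\<in>space M. t \<le> \<bar>\<Sum>i\<in>I. W i x\<bar>} \<le> (\<Sum>i\<in>I. expectation (\<lambda>x. (W i x)^2)) / t^2"
proof -
  have rv[measurable]: "i \<in> I \<Longrightarrow> random_variable borel (W i)" for i
    using ind unfolding indep_vars_def2 by auto
  have int: "i \<in> I \<Longrightarrow> integrable M (W i)" for i
    by (rule square_integrable_imp_integrable[OF rv sq])
  have rvs[measurable]: "random_variable borel (\<lambda>x. \<Sum>i\<in>I. W i x)"
    using rv by (intro borel_measurable_sum) auto
  have e0: "expectation (\<lambda>x. \<Sum>i\<in>I. W i x) = 0"
    using int mean by (simp add: integral_sum)
  have "prob {x\<in>space M. t \<le> \<bar>(\<Sum>i\<in>I. W i x) - expectation (\<lambda>x. \<Sum>i\<in>I. W i x)\<bar>}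
      \<le> variance (\<lambda>x. \<Sum>i\<in>I. W i x) / t^2"
    by (rule Chebyshev_inequality[OF rvs indep_sum_sq(1)[OF ind fin sq mean] t])
  then show ?thesis using indep_sum_sq(2)[OF ind fin sq mean] e0 by simp
qed


definition cip :: "'a measure \<Rightarrow> (nat \<Rightarrow> 'a \<Rightarrow> real) \<Rightarrow> real \<Rightarrow> bool" where
  "cip M U u \<longleftrightarrow> (\<forall>e>0. (\<lambda>n. measure M {x\<in>space M. e \<le> \<bar>U n x - u\<bar>}) \<longlonglongrightarrow> 0)"

lemma (in prob_space) prob_le_union:
  assumes "A \<subseteq> B \<union> C" "B \<in> events" "C \<in> events"
  shows "prob A \<le> prob B + prob C"
proof (cases "A \<in> events")
  case True
  then have "prob A \<le> prob (B \<union> C)" using assms by (intro finite_measure_mono) auto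
  also have "\<dots> \<le> prob B + prob C" using assms by (intro measure_Un_le) auto
  finally show ?thesis .
next
  case False then show ?thesis by (simp add: measure_notin_sets)
qed

lemma (in prob_space) cipI:
  assumes "\<And>e \<epsilon>. e > 0 \<Longrightarrow> \<epsilon> > 0 \<Longrightarrow> eventually (\<lambda>n. prob {x\<in>space M. e \<le> \<bar>U n x - u\<bar>} < \<epsilon>) sequentially"
  shows "cip M U u"
  unfolding cip_def
proof (intro allI impI)
  fix e :: real assume e: "e > 0"
  show "(\<lambda>n. prob {x\<in>space M. e \<le> \<bar>U n x - u\<bar>}) \<longlonglongrightarrow> 0"
    unfolding tendsto_iff dist_real_def using assms[OF e] by simp
qed

lemma (in prob_space) cipD:
  assumes "cip M U u" "e > 0" "\<epsilon> > 0"
  shows "eventually (\<lambda>n. prob {x\<in>space M. e \<le> \<bar>U n x - u\<bar>} < \<epsilon>) sequentially"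
proof -
  have "(\<lambda>n. prob {x\<in>space M. e \<le> \<bar>U n x - u\<bar>}) \<longlonglongrightarrow> 0" using assms(1,2) unfolding cip_def by auto
  then have "eventually (\<lambda>n. dist (prob {x\<in>space M. e \<le> \<bar>U n x - u\<bar>}) 0 < \<epsilon>) sequentially"
    using assms(3) unfolding tendsto_iff by blast
  then show ?thesis by (simp add: dist_real_def)
qed

lemma (in prob_space) cip_cont2:
  assumes U: "cip M U u" and V: "cip M V v"
    and g: "isCont (\<lambda>z. g (fst z) (snd z)) (u, v)"
    and [measurable]: "\<And>n. U n \<in> borel_measurable M" "\<And>n. V n \<in> borel_measurable M"
  shows "cip M (\<lambda>n x. g (U n x) (V n x)) (g u v)"
proof (rule cipI)
  fix e \<epsilon> :: real assume e: "e > 0" and \<epsilon>: "\<epsilon> > 0"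
  obtain d where d: "d > 0" and dd: "\<And>y. dist y (u, v) < d \<Longrightarrow> dist (g (fst y) (snd y)) (g u v) < e"
    using g e unfolding continuous_at_eps_delta by force
  have ev: "eventually (\<lambda>n. prob {x\<in>space M. d/2 \<le> \<bar>U n x - u\<bar>} < \<epsilon>/2 \<and>
      prob {x\<in>space M. d/2 \<le> \<bar>V n x - v\<bar>} < \<epsilon>/2) sequentially"
    using cipD[OF U, of "d/2" "\<epsilon>/2"] cipD[OF V, of "d/2" "\<epsilon>/2"] d \<epsilon> eventually_conj by auto
  show "eventually (\<lambda>n. prob {x\<in>space M. e \<le> \<bar>g (U n x) (V n x) - g u v\<bar>} < \<epsilon>) sequentially"
    using ev
  proof eventually_elim
    case (elim n)
    have sub: "{x\<in>space M. e \<le> \<bar>g (U n x) (V n x) - g u v\<bar>} \<subseteq>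
        {x\<in>space M. d/2 \<le> \<bar>U n x - u\<bar>} \<union> {x\<in>space M. d/2 \<le> \<bar>V n x - v\<bar>}"
    proof
      fix x assume x: "x \<in> {x\<in>space M. e \<le> \<bar>g (U n x) (V n x) - g u v\<bar>}"
      show "x \<in> {x\<in>space M. d/2 \<le> \<bar>U n x - u\<bar>} \<union> {x\<in>space M. d/2 \<le> \<bar>V n x - v\<bar>}"
      proof (rule ccontr)
        assume "\<not> ?thesis"
        then have a: "\<bar>U n x - u\<bar> < d/2" "\<bar>V n x - v\<bar> < d/2" using x by auto
        have "dist (U n x, V n x) (u, v) = sqrt ((U n x - u)^2 + (V n x - v)^2)"
          by (simp add: dist_Pair_Pair dist_real_def)
        also have "\<dots> \<le> \<bar>U n x - u\<bar> + \<bar>V n x - v\<bar>" by (rule sqrt_sum_squares_le_sum_abs)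
        also have "\<dots> < d" using a by simp
        finally have "dist (g (U n x) (V n x)) (g u v) < e" using dd[of "(U n x, V n x)"] by simp
        then show False using x by (simp add: dist_real_def)
      qed
    qed
    have "prob {x\<in>space M. e \<le> \<bar>g (U n x) (V n x) - g u v\<bar>} \<le>
        prob {x\<in>space M. d/2 \<le> \<bar>U n x - u\<bar>} + prob {x\<in>space M. d/2 \<le> \<bar>V n x - v\<bar>}"
      by (rule prob_le_union[OF sub]) measurable
    then show ?case using elim by simp
  qed
qed


lemma alg_aux: "0 < s \<Longrightarrow> 0 < (R::real) \<Longrightarrow> A / (sqrt 2 * s) * (sqrt 2 * (Q / s) / (R / s * (1 + R / s))) = Q * (A / (s + R)) / R"
proof -
  assume sp: "0 < s" and Rp: "0 < R"
  have q: "sqrt 2 \<noteq> 0" "s \<noteq> 0" "R \<noteq> 0" "s + R \<noteq> 0" using sp Rp by auto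
  have t: "R / s * (1 + R / s) = R * (s + R) / (s * s)" using q by (simp add: field_simps)
  show ?thesis unfolding t using q by (simp add: field_simps)
qed

lemma stat_ident:
  fixes x :: "nat \<Rightarrow> real" assumes pn: "p \<le> n" and n: "0 < n"
  shows "sqrt (\<Sum>i<p. (sqrt (real n) * (x i / sqrt (\<Sum>j<n. (x j)^2)) - x i)^2) =
    \<bar>(\<Sum>i<n. (x i)^2 - 1) / sqrt (real n * 2)\<bar> * (sqrt 2 * sqrt ((\<Sum>i<p. (x i)^2)/real n) /
      (sqrt ((\<Sum>j<n. (x j)^2)/real n) * (1 + sqrt ((\<Sum>j<n. (x j)^2)/real n))))"
proof -
  define R2 where "R2 = (\<Sum>j<n. (x j)^2)"
  define P where "P = (\<Sum>i<p. (x i)^2)"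
  have R2nn: "R2 \<ge> 0" unfolding R2_def by (simp add: sum_nonneg)
  have Pnn: "P \<ge> 0" unfolding P_def by (simp add: sum_nonneg)
  have sumW: "(\<Sum>i<n. (x i)^2 - 1) = R2 - real n" unfolding R2_def by (simp add: sum_subtractf)
  have lhs: "(\<Sum>i<p. (sqrt (real n) * (x i / sqrt R2) - x i)^2) = P * (sqrt (real n) / sqrt R2 - 1)^2"
    unfolding P_def sum_distrib_right
    by (intro sum.cong refl) (simp add: power2_eq_square field_simps)
  show ?thesis
  proof (cases "R2 = 0")
    case True
    then have "\<forall>j\<in>{..<n}. (x j)^2 = 0" unfolding R2_def by (subst sum_nonneg_eq_0_iff[symmetric]) auto
    then have "P = 0" unfolding P_def using pn by (intro sum.neutral) auto
    then show ?thesis using lhs True by (simp add: R2_def[symmetric] P_def[symmetric])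
  next
    case False
    then have R2p: "R2 > 0" using R2nn by simp
    define s where "s = sqrt (real n)"
    define R where "R = sqrt R2"
    have sp: "s > 0" unfolding s_def using n by simp
    have Rp: "R > 0" unfolding R_def using R2p by simp
    have ns: "real n = s^2" unfolding s_def by simp
    have R2R: "R2 = R^2" unfolding R_def using R2nn by simp
    have e1: "sqrt (real n * 2) = sqrt 2 * s" unfolding s_def by (simp add: real_sqrt_mult)
    have e2: "sqrt (P / real n) = sqrt P / s" unfolding s_def by (simp add: real_sqrt_divide)
    have e3: "sqrt (R2 / real n) = R / s" unfolding s_def R_def by (simp add: real_sqrt_divide)
    have "sqrt (P * (s / R - 1)^2) = sqrt P * \<bar>s / R - 1\<bar>" by (simp add: real_sqrt_mult)
    also have "\<bar>s / R - 1\<bar> = \<bar>s - R\<bar> / R" using Rp by (simp add: field_simps abs_div)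
    also have "\<bar>s - R\<bar> = \<bar>R^2 - s^2\<bar> / (s + R)"
    proof -
      have "R^2 - s^2 = (R - s) * (R + s)" by (simp add: power2_eq_square algebra_simps)
      then have "\<bar>R^2 - s^2\<bar> = \<bar>s - R\<bar> * (s + R)" using sp Rp by (simp add: abs_mult abs_minus_commute add.commute)
      then show ?thesis using sp Rp by simp
    qed
    finally have L: "sqrt (P * (s / R - 1)^2) = sqrt P * (\<bar>R^2 - s^2\<bar> / (s + R)) / R" by simp
    have "\<bar>(R2 - real n) / sqrt (real n * 2)\<bar> * (sqrt 2 * sqrt (P / real n) / (sqrt (R2 / real n) * (1 + sqrt (R2 / real n))))
        = \<bar>R^2 - s^2\<bar> / (sqrt 2 * s) * (sqrt 2 * (sqrt P / s) / (R / s * (1 + R / s)))"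
      unfolding e1 e2 e3 unfolding R2R ns using sp by (simp add: abs_div abs_mult)
    also have "\<dots> = sqrt P * (\<bar>R^2 - s^2\<bar> / (s + R)) / R"
      by (rule alg_aux[OF sp Rp])
    finally show ?thesis using lhs L
      by (simp add: R2_def[symmetric] P_def[symmetric] sumW s_def[symmetric] R_def[symmetric])
  qed
qed


lemma (in prob_space) prob_le:
  assumes "A \<subseteq> B" "B \<in> events"
  shows "prob A \<le> prob B"
proof (cases "A \<in> events")
  case True then show ?thesis using assms by (intro finite_measure_mono) auto
next
  case False then show ?thesis by (simp add: measure_notin_sets)
qed

lemma (in prob_space) main_X:
  fixes X :: "nat \<Rightarrow> nat \<Rightarrow> 'a \<Rightarrow> real" and p :: "nat \<Rightarrow> nat" and c :: real
  assumes ind: "\<And>n. indep_vars (\<lambda>_. borel) (X n) {..<n}"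
    and dist: "\<And>n i. i < n \<Longrightarrow> distr M borel (X n i) = std_normal_distribution"
    and pn: "\<And>n. p n \<le> n" and c: "0 < c" "c \<le> 1" and pc: "(\<lambda>n. real (p n) / real n) \<longlonglongrightarrow> c"
  shows "weak_conv_m (\<lambda>n. distr M borel (\<lambda>\<omega>. sqrt (\<Sum>i<p n.
      (sqrt (real n) * (X n i \<omega> / sqrt (\<Sum>j<n. (X n j \<omega>)^2)) - X n i \<omega>)^2)))
    (distr std_normal_distribution borel (\<lambda>z. sqrt (c / 2) * \<bar>z\<bar>))"
proof -
  interpret N: real_distribution std_normal_distribution by (rule real_dist_normal_dist)
  have rv[measurable]: "i < n \<Longrightarrow> X n i \<in> borel_measurable M" for n i
    using ind[of n] unfolding indep_vars_def2 by auto
  have mom: "integrable M (\<lambda>\<omega>. (X n i \<omega>)^k) \<and>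
      expectation (\<lambda>\<omega>. (X n i \<omega>)^k) = (LINT x|std_normal_distribution. x^k)" if "i < n" for n i k
  proof -
    have "integrable (distr M borel (X n i)) (\<lambda>x. x^k)" using dist[OF that]
      by (simp add: integrable_std_normal_distribution_moment)
    then have "integrable M (\<lambda>\<omega>. (X n i \<omega>)^k)" using that by (subst (asm) integrable_distr_eq) auto
    moreover have "integral\<^sup>L (distr M borel (X n i)) (\<lambda>x. x^k) = expectation (\<lambda>\<omega>. (X n i \<omega>)^k)"
      using that by (intro integral_distr) auto
    ultimately show ?thesis using dist[OF that] by simp
  qed
  have m2: "(LINT x|std_normal_distribution. x^2) = 1"
    using std_normal_distribution_even_moments(1)[of 1] by simp
  have m4: "(LINT x|std_normal_distribution. x^4) = 3"
    using std_normal_distribution_even_moments(1)[of 2] by (simp add: fact_numeral)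
  define W where "W n i \<omega> = (X n i \<omega>)^2 - 1" for n i \<omega>
  have W_ind: "indep_vars (\<lambda>_. borel) (W n) {..<n}" for n
    unfolding W_def by (rule indep_vars_compose2[OF ind]) auto
  have W_int: "integrable M (\<lambda>\<omega>. (W n i \<omega>)^2)" and W_mean: "expectation (W n i) = 0"
    and W_var: "expectation (\<lambda>\<omega>. (W n i \<omega>)^2) = 2" if "i < n" for n i
  proof -
    have sq: "(\<lambda>\<omega>. (W n i \<omega>)^2) = (\<lambda>\<omega>. (X n i \<omega>)^4 - 2 * (X n i \<omega>)^2 + 1)"
      unfolding W_def by (rule ext) (simp add: power2_diff flip: power_mult)
    show "integrable M (\<lambda>\<omega>. (W n i \<omega>)^2)" unfolding sq using mom[OF that, of 4] mom[OF that, of 2] by auto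
    show "expectation (W n i) = 0" unfolding W_def using mom[OF that, of 2] m2 by (simp add: prob_space)
    show "expectation (\<lambda>\<omega>. (W n i \<omega>)^2) = 2" unfolding sq using mom[OF that, of 4] mom[OF that, of 2] m2 m4
      by (simp add: prob_space)
  qed
  have W_rv[measurable]: "i < n \<Longrightarrow> W n i \<in> borel_measurable M" for n i unfolding W_def by measurable
  define \<mu> where "\<mu> = distr M borel (W 1 0)"
  have W_dist: "distr M borel (W n i) = \<mu>" if "i < n" for n i
  proof -
    have "distr M borel (W n i) = distr (distr M borel (X n i)) borel (\<lambda>x. x^2 - 1)"
      using that by (subst distr_distr) (auto simp: W_def[abs_def] comp_def)
    also have "\<dots> = distr (distr M borel (X 1 0)) borel (\<lambda>x. x^2 - 1)" using dist[OF that] dist[of 0 1] by simp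
    also have "\<dots> = \<mu>" unfolding \<mu>_def by (subst distr_distr) (auto simp: W_def[abs_def] comp_def)
    finally show ?thesis .
  qed
  have W10: "integrable M (W 1 0)" by (rule square_integrable_imp_integrable[OF W_rv W_int]) auto
  have clt0: "weak_conv_m (\<lambda>n. distr M borel (\<lambda>x. (\<Sum>i<n. W n i x) / sqrt (n * (sqrt 2)\<^sup>2))) std_normal_distribution"
  proof (rule clt_tri[OF W_ind _ W_dist])
    show "real_distribution \<mu>" unfolding \<mu>_def by (rule real_distribution_distr) simp
    show "integrable \<mu> (\<lambda>x. x)" unfolding \<mu>_def using W10 by (subst integrable_distr_eq) auto
    show "integral\<^sup>L \<mu> (\<lambda>x. x) = 0" unfolding \<mu>_def using W_mean[of 0 1] by (subst integral_distr) auto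
    show "integrable \<mu> (\<lambda>x. x^2)" unfolding \<mu>_def using W_int[of 0 1] by (subst integrable_distr_eq) auto
    show "integral\<^sup>L \<mu> (\<lambda>x. x^2) = (sqrt 2)\<^sup>2" unfolding \<mu>_def using W_var[of 0 1] by (subst integral_distr) auto
  qed auto
  define Z where "Z n x = (\<Sum>i<n. W n i x) / sqrt (real n * 2)" for n x
  have Z_rv[measurable]: "Z n \<in> borel_measurable M" for n unfolding Z_def by measurable
  have clt: "weak_conv_m (\<lambda>n. distr M borel (Z n)) std_normal_distribution"
    using clt0 by (simp add: Z_def[abs_def])
  have cheb: "prob {x\<in>space M. t \<le> \<bar>\<Sum>i<k. W n i x\<bar>} \<le> 2 * real k / t^2" if "k \<le> n" "t > 0" for k n t
  proof -
    have "prob {x\<in>space M. t \<le> \<bar>\<Sum>i<k. W n i x\<bar>} \<le> (\<Sum>i<k. expectation (\<lambda>x. (W n i x)^2)) / t^2"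
      using that by (intro indep_sum_cheb indep_vars_subset[OF W_ind] W_int W_mean) auto
    also have "(\<Sum>i<k. expectation (\<lambda>x. (W n i x)^2)) = (\<Sum>i<k. 2)"
      using that by (intro sum.cong refl W_var) auto
    finally show ?thesis by (simp add: mult.commute)
  qed
  have lln: "cip M (\<lambda>n x. (\<Sum>i<k n. (X n i x)^2) / real n) c'"
    if kn: "\<And>n. k n \<le> n" and kc: "(\<lambda>n. real (k n) / real n) \<longlonglongrightarrow> c'" for k c'
  proof (rule cipI)
    fix e \<epsilon> :: real assume e: "e > 0" and \<epsilon>: "\<epsilon> > 0"
    have ev1: "eventually (\<lambda>n. dist (real (k n) / real n) c' < e/2) sequentially"
      using e by (intro tendsto_iff[THEN iffD1, OF kc, rule_format]) simp
    have "(\<lambda>n. (8 / e^2) * inverse (real n)) \<longlonglongrightarrow> 0"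
      by (intro tendsto_mult_right_zero lim_inverse_n)
    then have ev2: "eventually (\<lambda>n. dist ((8 / e^2) * inverse (real n)) 0 < \<epsilon>) sequentially"
      using \<epsilon> by (intro tendsto_iff[THEN iffD1, rule_format]) simp
    show "eventually (\<lambda>n. prob {x\<in>space M. e \<le> \<bar>(\<Sum>i<k n. (X n i x)^2) / real n - c'\<bar>} < \<epsilon>) sequentially"
      using ev1 ev2 eventually_gt_at_top[of 0]
    proof eventually_elim
      case (elim n)
      have np: "real n > 0" using elim by simp
      have sub: "{x\<in>space M. e \<le> \<bar>(\<Sum>i<k n. (X n i x)^2) / real n - c'\<bar>} \<subseteq>
          {x\<in>space M. e * real n / 2 \<le> \<bar>\<Sum>i<k n. W n i x\<bar>}"
      proof safe
        fix x assume x: "x \<in> space M" "e \<le> \<bar>(\<Sum>i<k n. (X n i x)^2) / real n - c'\<bar>"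
        define S where "S = (\<Sum>i<k n. (X n i x)^2)"
        have sw: "(\<Sum>i<k n. W n i x) = S - real (k n)" unfolding S_def W_def by (simp add: sum_subtractf)
        have "\<bar>S / real n - c'\<bar> \<le> \<bar>S / real n - real (k n) / real n\<bar> + \<bar>real (k n) / real n - c'\<bar>" by simp
        also have "\<bar>S / real n - real (k n) / real n\<bar> = \<bar>S - real (k n)\<bar> / real n"
          using np by (simp add: diff_divide_distrib[symmetric] abs_div)
        finally have "e < \<bar>S - real (k n)\<bar> / real n + e / 2" using x elim unfolding S_def dist_real_def by simp
        then have "e / 2 * real n < \<bar>S - real (k n)\<bar>" using np by (simp add: field_simps)
        then show "e * real n / 2 \<le> \<bar>\<Sum>i<k n. W n i x\<bar>" unfolding sw by simp
      qed
      have "prob {x\<in>space M. e \<le> \<bar>(\<Sum>i<k n. (X n i x)^2) / real n - c'\<bar>}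
          \<le> prob {x\<in>space M. e * real n / 2 \<le> \<bar>\<Sum>i<k n. W n i x\<bar>}"
      proof (rule prob_le[OF sub])
        have "i < k n \<Longrightarrow> W n i \<in> borel_measurable M" for i using kn[of n] by (intro W_rv) simp
        then show "{x\<in>space M. e * real n / 2 \<le> \<bar>\<Sum>i<k n. W n i x\<bar>} \<in> events" by measurable
      qed
      also have "\<dots> \<le> 2 * real (k n) / (e * real n / 2)^2"
        using kn e np by (intro cheb) auto
      also have "\<dots> \<le> 2 * real n / (e * real n / 2)^2"
        using kn[of n] e np by (intro divide_right_mono) auto
      also have "\<dots> = (8 / e^2) * inverse (real n)"
        using e np by (simp add: field_simps power2_eq_square)
      finally show ?case using elim by (simp add: dist_real_def)
    qed
  qed
  define Sp where "Sp n x = (\<Sum>i<p n. (X n i x)^2) / real n" for n x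
  define Sn where "Sn n x = (\<Sum>i<n. (X n i x)^2) / real n" for n x
  have Sp_rv[measurable]: "Sp n \<in> borel_measurable M" for n
  proof -
    have "i < p n \<Longrightarrow> X n i \<in> borel_measurable M" for i using pn[of n] by (intro rv) simp
    then show ?thesis unfolding Sp_def by measurable
  qed
  have Sn_rv[measurable]: "Sn n \<in> borel_measurable M" for n unfolding Sn_def by measurable
  have cipP: "cip M Sp c" unfolding Sp_def[abs_def] by (rule lln[OF pn pc])
  have n1: "(\<lambda>n. real n / real n) \<longlonglongrightarrow> 1"
  proof (rule LIMSEQ_I)
    fix r :: real assume "0 < r" then show "\<exists>no. \<forall>n\<ge>no. norm (real n / real n - 1) < r"
      by (intro exI[of _ 1]) auto
  qed
  have cipN: "cip M Sn 1" unfolding Sn_def[abs_def] by (rule lln[OF _ n1]) simp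
  define g where "g u v = sqrt 2 * sqrt u / (sqrt v * (1 + sqrt v))" for u v :: real
  define a where "a = sqrt (c / 2)"
  have ap: "a > 0" unfolding a_def using c by simp
  have ga: "g c 1 = a"
  proof -
    have "sqrt (c / 2) = sqrt c / sqrt 2" by (simp add: real_sqrt_divide)
    also have "\<dots> = sqrt 2 * sqrt c / 2" by (simp add: field_simps)
    finally show ?thesis unfolding g_def a_def by simp
  qed
  define A where "A n x = g (Sp n x) (Sn n x)" for n x
  have A_rv[measurable]: "A n \<in> borel_measurable M" for n unfolding A_def g_def by measurable
  have cipA: "cip M A a"
  proof -
    have "isCont (\<lambda>z. g (fst z) (snd z)) (c, 1)" unfolding g_def by (intro continuous_intros) auto
    from cip_cont2[OF cipP cipN this] show ?thesis unfolding A_def[abs_def] ga by simp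
  qed
  define T where "T n \<omega> = sqrt (\<Sum>i<p n. (sqrt (real n) * (X n i \<omega> / sqrt (\<Sum>j<n. (X n j \<omega>)^2)) - X n i \<omega>)^2)" for n \<omega>
  have T_rv[measurable]: "T n \<in> borel_measurable M" for n
  proof -
    have "i < p n \<Longrightarrow> X n i \<in> borel_measurable M" for i using pn[of n] by (intro rv) simp
    then show ?thesis unfolding T_def by measurable
  qed
  have T_eq: "T n x = \<bar>Z n x\<bar> * A n x" if "n > 0" for n x
    unfolding T_def Z_def A_def g_def Sp_def Sn_def W_def using stat_ident[OF pn[of n] that] by simp
  have Ztail: "prob {x\<in>space M. K \<le> \<bar>Z n x\<bar>} \<le> 1 / K^2" if "n > 0" "K > 0" for n K
  proof -
    have sp: "sqrt (real n * 2) > 0" using that by simp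
    have "{x\<in>space M. K \<le> \<bar>Z n x\<bar>} = {x\<in>space M. K * sqrt (real n * 2) \<le> \<bar>\<Sum>i<n. W n i x\<bar>}"
      unfolding Z_def using sp by (auto simp: abs_div le_divide_eq)
    also have "prob \<dots> \<le> 2 * real n / (K * sqrt (real n * 2))^2"
      using that by (intro cheb) auto
    also have "\<dots> = 1 / K^2" using that by (simp add: power_mult_distrib field_simps)
    finally show ?thesis .
  qed
  define D where "D n x = T n x - a * \<bar>Z n x\<bar>" for n x
  have D_rv[measurable]: "D n \<in> borel_measurable M" for n unfolding D_def by measurable
  have cipDD: "cip M D 0"
  proof (rule cipI)
    fix e \<epsilon> :: real assume e: "e > 0" and \<epsilon>: "\<epsilon> > 0"
    define K where "K = sqrt (2 / \<epsilon>)"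
    have Kp: "K > 0" unfolding K_def using \<epsilon> by simp
    have K2: "1 / K^2 = \<epsilon> / 2" unfolding K_def using \<epsilon> by simp
    show "eventually (\<lambda>n. prob {x\<in>space M. e \<le> \<bar>D n x - 0\<bar>} < \<epsilon>) sequentially"
      using cipD[OF cipA divide_pos_pos[OF e Kp] half_gt_zero[OF \<epsilon>]] eventually_gt_at_top[of 0]
    proof eventually_elim
      case (elim n)
      have sub: "{x\<in>space M. e \<le> \<bar>D n x - 0\<bar>} \<subseteq> {x\<in>space M. K \<le> \<bar>Z n x\<bar>} \<union> {x\<in>space M. e / K \<le> \<bar>A n x - a\<bar>}"
      proof safe
        fix x assume x: "x \<in> space M" "e \<le> \<bar>D n x - 0\<bar>" "\<not> e / K \<le> \<bar>A n x - a\<bar>"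
        have Dx: "\<bar>D n x\<bar> = \<bar>Z n x\<bar> * \<bar>A n x - a\<bar>"
        proof -
          have "T n x - a * \<bar>Z n x\<bar> = \<bar>Z n x\<bar> * (A n x - a)" unfolding T_eq[OF elim(2)] by (simp add: algebra_simps)
          then show ?thesis unfolding D_def by (simp add: abs_mult)
        qed
        show "K \<le> \<bar>Z n x\<bar>"
        proof (rule ccontr)
          assume "\<not> K \<le> \<bar>Z n x\<bar>"
          then have "\<bar>Z n x\<bar> * \<bar>A n x - a\<bar> \<le> K * \<bar>A n x - a\<bar>" by (intro mult_right_mono) auto
          also have "\<dots> < K * (e / K)" using x(3) Kp by (intro mult_strict_left_mono) auto
          also have "\<dots> = e" using Kp by simp
          finally show False using x(2) Dx by simp
        qed
      qed
      have "prob {x\<in>space M. e \<le> \<bar>D n x - 0\<bar>} \<le> prob {x\<in>space M. K \<le> \<bar>Z n x\<bar>} + prob {x\<in>space M. e / K \<le> \<bar>A n x - a\<bar>}"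
        by (rule prob_le_union[OF sub]) measurable
      also have "\<dots> < \<epsilon> / 2 + \<epsilon> / 2" using Ztail[OF elim(2) Kp] K2 elim(1) by simp
      finally show ?case by simp
    qed
  qed
  let ?N = "std_normal_distribution"
  have null2: "emeasure ?N {-t, t} = 0" for t :: real
  proof -
    have "{-t, t} \<in> null_sets ?N"
    proof -
      have ae: "AE x in lborel. x \<notin> {-t, t}" by (rule AE_not_in) (rule finite_imp_null_set_lborel, simp)
      have "AE x in lborel. x \<in> {-t, t} \<longrightarrow> std_normal_density x = 0" using ae by eventually_elim auto
      then show ?thesis by (subst null_sets_density_iff) auto
    qed
    then show ?thesis by auto
  qed
  have null2': "measure ?N {-t, t} = 0" for t :: real using null2[of t] by (simp add: measure_def)
  have fr: "emeasure ?N (frontier {z::real. \<bar>z\<bar> \<le> t}) = 0" for t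
  proof -
    have cl: "closed {z::real. \<bar>z\<bar> \<le> t}" by (intro closed_Collect_le continuous_intros)
    have "{z::real. \<bar>z\<bar> < t} \<subseteq> interior {z::real. \<bar>z\<bar> \<le> t}"
      by (intro interior_maximal open_Collect_less continuous_intros) auto
    then have "frontier {z::real. \<bar>z\<bar> \<le> t} \<subseteq> {-t, t}"
    proof (intro subsetI)
      fix x assume sub: "{z::real. \<bar>z\<bar> < t} \<subseteq> interior {z::real. \<bar>z\<bar> \<le> t}" and x: "x \<in> frontier {z::real. \<bar>z\<bar> \<le> t}"
      then have "\<bar>x\<bar> \<le> t" "\<not> \<bar>x\<bar> < t" using cl unfolding frontier_def by auto
      then show "x \<in> {-t, t}" by (cases "x \<ge> 0") auto
    qed
    then have "emeasure ?N (frontier {z::real. \<bar>z\<bar> \<le> t}) \<le> emeasure ?N {-t, t}"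
      by (intro emeasure_mono) auto
    then show ?thesis using null2[of t] by simp
  qed
  define G where "G t = measure ?N {z. \<bar>z\<bar> \<le> t}" for t
  have hG: "(\<lambda>n. prob {x\<in>space M. \<bar>Z n x\<bar> \<le> t}) \<longlonglongrightarrow> G t" for t
  proof -
    have "(\<lambda>n. measure (distr M borel (Z n)) {z. \<bar>z\<bar> \<le> t}) \<longlonglongrightarrow> measure ?N {z. \<bar>z\<bar> \<le> t}"
      by (rule weak_conv_imp_continuity_set_conv[OF _ real_dist_normal_dist clt _ fr])
         (auto intro!: real_distribution_distr)
    moreover have "measure (distr M borel (Z n)) {z. \<bar>z\<bar> \<le> t} = prob {x\<in>space M. \<bar>Z n x\<bar> \<le> t}" for n
      by (subst measure_distr) (auto intro!: arg_cong[where f=prob])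
    ultimately show ?thesis unfolding G_def by simp
  qed
  define H where "H = distr ?N borel abs"
  interpret H: real_distribution H unfolding H_def by (intro N.real_distribution_distr) auto
  have cdfH: "cdf H t = G t" for t
    unfolding cdf_def G_def H_def by (subst measure_distr) (auto intro!: arg_cong[where f="measure ?N"])
  have Gcont: "isCont G s" for s
  proof -
    have "measure H {s} = measure ?N {z. \<bar>z\<bar> = s}"
      unfolding H_def by (subst measure_distr) (auto intro!: arg_cong[where f="measure ?N"])
    also have "\<dots> \<le> measure ?N {-s, s}" by (intro N.finite_measure_mono) auto
    finally have "measure H {s} = 0" using null2' measure_nonneg[of H "{s}"] by simp
    then have "isCont (cdf H) s" by (simp add: H.isCont_cdf)
    moreover have "cdf H = G" using cdfH by auto
    ultimately show ?thesis by simp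
  qed
  have cdfT: "cdf (distr ?N borel (\<lambda>z. a * \<bar>z\<bar>)) y = G (y / a)" for y
  proof -
    have "cdf (distr ?N borel (\<lambda>z. a * \<bar>z\<bar>)) y = measure ?N {z. a * \<bar>z\<bar> \<le> y}"
      unfolding cdf_def by (subst measure_distr) (auto intro!: arg_cong[where f="measure ?N"])
    also have "{z. a * \<bar>z\<bar> \<le> y} = {z. \<bar>z\<bar> \<le> y / a}" using ap by (auto simp: pos_le_divide_eq mult.commute)
    finally show ?thesis unfolding G_def .
  qed
  have cdfS: "cdf (distr M borel (T n)) y = prob {x\<in>space M. T n x \<le> y}" for n y
    unfolding cdf_def by (subst measure_distr) (auto intro!: arg_cong[where f=prob])
  have conv: "(\<lambda>n. prob {x\<in>space M. T n x \<le> y}) \<longlonglongrightarrow> G (y / a)" for y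
  proof (rule tendstoI)
    fix \<epsilon> :: real assume \<epsilon>: "\<epsilon> > 0"
    obtain d where d: "d > 0" and dd: "\<And>z. dist z (y / a) < d \<Longrightarrow> dist (G z) (G (y / a)) < \<epsilon> / 3"
      using Gcont[of "y / a"] \<epsilon> unfolding continuous_at_eps_delta by (meson divide_pos_pos zero_less_numeral)
    have Gp: "\<bar>G (y / a + d / 2) - G (y / a)\<bar> < \<epsilon> / 3" using dd[of "y / a + d / 2"] d by (simp add: dist_real_def)
    have Gm: "\<bar>G (y / a - d / 2) - G (y / a)\<bar> < \<epsilon> / 3" using dd[of "y / a - d / 2"] d by (simp add: dist_real_def)
    define \<eta> where "\<eta> = a * d / 2"
    have \<eta>: "\<eta> > 0" unfolding \<eta>_def using ap d by simp
    have e3: "\<epsilon> / 3 > 0" using \<epsilon> by simp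
    show "eventually (\<lambda>n. dist (prob {x\<in>space M. T n x \<le> y}) (G (y / a)) < \<epsilon>) sequentially"
      using tendstoD[OF hG[of "y / a + d / 2"] e3] tendstoD[OF hG[of "y / a - d / 2"] e3]
        cipD[OF cipDD \<eta> e3]
    proof eventually_elim
      case (elim n)
      have up: "{x\<in>space M. T n x \<le> y} \<subseteq> {x\<in>space M. \<bar>Z n x\<bar> \<le> y / a + d / 2} \<union> {x\<in>space M. \<eta> \<le> \<bar>D n x - 0\<bar>}"
      proof safe
        fix x assume x: "x \<in> space M" "T n x \<le> y" "\<not> \<eta> \<le> \<bar>D n x - 0\<bar>"
        have h: "\<bar>T n x - a * \<bar>Z n x\<bar>\<bar> < a * d / 2" using x(3) unfolding D_def \<eta>_def by simp
        have "a * (y / a + d / 2) = y + a * d / 2" using ap by (simp add: field_simps)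
        moreover have "a * \<bar>Z n x\<bar> \<le> y + a * d / 2" using h x(2) unfolding abs_less_iff by linarith
        ultimately have "a * \<bar>Z n x\<bar> \<le> a * (y / a + d / 2)" by simp
        then show "\<bar>Z n x\<bar> \<le> y / a + d / 2" using ap by simp
      qed
      have lo: "{x\<in>space M. \<bar>Z n x\<bar> \<le> y / a - d / 2} \<subseteq> {x\<in>space M. T n x \<le> y} \<union> {x\<in>space M. \<eta> \<le> \<bar>D n x - 0\<bar>}"
      proof safe
        fix x assume x: "x \<in> space M" "\<bar>Z n x\<bar> \<le> y / a - d / 2" "\<not> \<eta> \<le> \<bar>D n x - 0\<bar>"
        have "a * \<bar>Z n x\<bar> \<le> a * (y / a - d / 2)" using x(2) ap by simp
        moreover have "a * (y / a - d / 2) = y - a * d / 2" using ap by (simp add: field_simps)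
        moreover have h: "\<bar>T n x - a * \<bar>Z n x\<bar>\<bar> < a * d / 2" using x(3) unfolding D_def \<eta>_def by simp
        ultimately show "T n x \<le> y" unfolding abs_less_iff by linarith
      qed
      have p1: "prob {x\<in>space M. T n x \<le> y} \<le> prob {x\<in>space M. \<bar>Z n x\<bar> \<le> y / a + d / 2} + prob {x\<in>space M. \<eta> \<le> \<bar>D n x - 0\<bar>}"
        by (rule prob_le_union[OF up]) measurable
      have p2: "prob {x\<in>space M. \<bar>Z n x\<bar> \<le> y / a - d / 2} \<le> prob {x\<in>space M. T n x \<le> y} + prob {x\<in>space M. \<eta> \<le> \<bar>D n x - 0\<bar>}"
        by (rule prob_le_union[OF lo]) measurable
      show ?case using p1 p2 elim Gp Gm unfolding dist_real_def abs_less_iff by linarith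
    qed
  qed
  show ?thesis
    unfolding weak_conv_m_def weak_conv_def
  proof (intro allI impI)
    fix y :: real
    have "(\<lambda>n. cdf (distr M borel (T n)) y) \<longlonglongrightarrow> cdf (distr ?N borel (\<lambda>z. a * \<bar>z\<bar>)) y"
      unfolding cdfS cdfT by (rule conv)
    then show "(\<lambda>n. cdf (distr M borel (\<lambda>\<omega>. sqrt (\<Sum>i<p n. (sqrt (real n) * (X n i \<omega> / sqrt (\<Sum>j<n. (X n j \<omega>)^2)) - X n i \<omega>)^2))) y)
      \<longlonglongrightarrow> cdf (distr ?N borel (\<lambda>z. sqrt (c / 2) * \<bar>z\<bar>)) y"
      by (simp only: T_def[abs_def] a_def)
  qed
qed


theorem lemma3p1:
  fixes M :: "'a measure"
    and Y :: "nat \<Rightarrow> nat \<Rightarrow> nat \<Rightarrow> 'a \<Rightarrow> real"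
    and p :: "nat \<Rightarrow> nat"
    and c :: real
  assumes "prob_space M"
    and "\<And>n. prob_space.indep_vars M (\<lambda>_. borel) (\<lambda>(i, j). Y n i j) ({..<n} \<times> {..<n})"
    and "\<And>n i j. i < n \<Longrightarrow> j < n \<Longrightarrow> distributed M lborel (Y n i j) std_normal_density"
    and "\<And>n. p n \<le> n"
    and "0 < c" and "c \<le> 1"
    and "(\<lambda>n. real (p n) / real n) \<longlonglongrightarrow> c"
  shows "weak_conv_m
           (\<lambda>n. distr M borel (\<lambda>\<omega>. sqrt (\<Sum>i<p n.
               (sqrt (real n) * gs_gamma n (\<lambda>i j. Y n i j \<omega>) i 0 - Y n i 0 \<omega>)\<^sup>2)))
           (distr (density lborel std_normal_density) borel (\<lambda>z. sqrt (c / 2) * \<bar>z\<bar>))"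
proof -
  interpret prob_space M by fact
  define X where "X n i \<omega> = Y n i 0 \<omega>" for n i \<omega>
  have ind: "indep_vars (\<lambda>_. borel) (X n) {..<n}" for n
  proof -
    have "indep_vars (\<lambda>j. borel) (\<lambda>j. (\<lambda>(i, j). Y n i j) (j, 0)) {..<n}"
      by (rule indep_vars_reindex[OF assms(2)[of n]]) (auto simp: inj_on_def)
    then show ?thesis by (simp add: X_def[abs_def])
  qed
  have dist: "distr M borel (X n i) = std_normal_distribution" if "i < n" for n i
  proof -
    have d: "distributed M lborel (Y n i 0) std_normal_density" using that by (intro assms(3)) auto
    then have "distr M lborel (Y n i 0) = std_normal_distribution" unfolding distributed_def by simp
    moreover have "distr M borel (X n i) = distr M lborel (Y n i 0)"
      by (rule distr_cong) (auto simp: X_def)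
    ultimately show ?thesis by simp
  qed
  have gs: "gs_gamma n (\<lambda>i j. Y n i j \<omega>) i 0 = X n i \<omega> / sqrt (\<Sum>j<n. (X n j \<omega>)^2)" for n i \<omega>
    by (simp add: gs_gamma_def vnorm_def vinner_def X_def power2_eq_square)
  have "weak_conv_m (\<lambda>n. distr M borel (\<lambda>\<omega>. sqrt (\<Sum>i<p n.
      (sqrt (real n) * (X n i \<omega> / sqrt (\<Sum>j<n. (X n j \<omega>)^2)) - X n i \<omega>)^2)))
    (distr std_normal_distribution borel (\<lambda>z. sqrt (c / 2) * \<bar>z\<bar>))"
    by (rule main_X[OF ind dist assms(4-7)])
  then show ?thesis unfolding gs by (simp only: X_def)
qed

end
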